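(* Let $K$ be a positive definite kernel on $\Omega\subset\mathbb{R}^d$, $X_n=\{x_1,\dots,x_n\}\subset\Omega$ pairwise distinct, $\lambda>0$ and $0\le\mu\le\lambda$, where in case $\mu=0$ the kernel $K$ is assumed strictly positive definite. Then for all $x\in\Omega$ $$Q_n^\lambda(x)^2\le P_n^\mu(x)^2+\lambda\left(1+\Lambda_{n,2}^\mu(x)^2\right),$$ and equality holds if $\mu=\lambda$ and $x\notin X_n$.
   Context: A kernel is positive definite if symmetric with positive semidefinite kernel matrices on pairwise distinct points (strictly: positive definite). $\mathcal{H}$ is the native space (RKHS) of $K$; $\delta(x,y)=1$ if $x=y$, else $0$; $K_\lambda:=K+\lambda\delta$ with native space $\mathcal{H}_\lambda$. Let $A=(K(x_i,x_j))_{i,j=1}^n$. For $f:\Omega\to\mathbb{R}$: $s_n^\mu(f):=\sum_j\alpha_jK(\cdot,x_j)$ with $(A+\mu I)\alpha=(f(x_i))_i$, and $I_n^\lambda(f):=\sum_j\alpha_jK_\lambda(\cdot,x_j)$ with $(A+\lambda I)\alpha=(f(x_i))_i$. $P_n^\mu(x):=\sup_{f\in\mathcal{H},f\ne0}|f(x)-s_n^\mu(f)(x)|/\|f\|_{\mathcal{H}}$ and $Q_n^\lambda(x):=\sup_{f\in\mathcal{H}_\lambda,f\ne0}|f(x)-I_n^\lambda(f)(x)|/\|f\|_{\mathcal{H}_\lambda}$. The Lagrange functions are $\ell_j^\mu:=\sum_{i=1}^n((A+\mu I)^{-1})_{ij}K(\cdot,x_i)$ and the $\ell_2$-Lebesgue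 function is $\Lambda_{n,2}^\mu(x):=\big(\sum_{j=1}^n\ell_j^\mu(x)^2\big)^{1/2}$. *)

theory Defs
  imports "HOL-Analysis.Analysis"
begin

definition pd_kernel :: "'a set \<Rightarrow> ('a \<Rightarrow> 'a \<Rightarrow> real) \<Rightarrow> bool" where
  "pd_kernel \<Omega> K \<longleftrightarrow>
     (\<forall>a\<in>\<Omega>. \<forall>b\<in>\<Omega>. K a b = K b a) \<and>
     (\<forall>S c. finite S \<longrightarrow> S \<subseteq> \<Omega> \<longrightarrow>
        0 \<le> (\<Sum>p\<in>S. \<Sum>q\<in>S. c p * c q * K p q))"

definition strictly_pd_kernel :: "'a set \<Rightarrow> ('a \<Rightarrow> 'a \<Rightarrow> real) \<Rightarrow> bool" where
  "strictly_pd_kernel \<Omega> K \<longleftrightarrow>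
     (\<forall>a\<in>\<Omega>. \<forall>b\<in>\<Omega>. K a b = K b a) \<and>
     (\<forall>S c. finite S \<longrightarrow> S \<subseteq> \<Omega> \<longrightarrow> (\<exists>p\<in>S. c p \<noteq> 0) \<longrightarrow>
        0 < (\<Sum>p\<in>S. \<Sum>q\<in>S. c p * c q * K p q))"

definition delta_kernel :: "'a \<Rightarrow> 'a \<Rightarrow> real" where
  "delta_kernel a b = (if a = b then 1 else 0)"

definition reg_kernel :: "('a \<Rightarrow> 'a \<Rightarrow> real) \<Rightarrow> real \<Rightarrow> 'a \<Rightarrow> 'a \<Rightarrow> real" where
  "reg_kernel K lam a b = K a b + lam * delta_kernel a b"

text \<open>Native space (RKHS) of a positive definite kernel, via Aronszajn's characterization:
  f belongs to the native space iff the functional (sum of c_p K(.,p)) |-> sum of c_p f(p) is bounded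
  on span of K(.,p), p in \<Omega>; the native norm is the norm of that functional.\<close>

definition native_vals :: "'a set \<Rightarrow> ('a \<Rightarrow> 'a \<Rightarrow> real) \<Rightarrow> ('a \<Rightarrow> real) \<Rightarrow> real set" where
  "native_vals \<Omega> K f = {\<bar>\<Sum>p\<in>S. c p * f p\<bar> | S c. finite S \<and> S \<subseteq> \<Omega> \<and>
       (\<Sum>p\<in>S. \<Sum>q\<in>S. c p * c q * K p q) \<le> 1}"

definition in_native :: "'a set \<Rightarrow> ('a \<Rightarrow> 'a \<Rightarrow> real) \<Rightarrow> ('a \<Rightarrow> real) \<Rightarrow> bool" where
  "in_native \<Omega> K f \<longleftrightarrow> bdd_above (native_vals \<Omega> K f)"

definition native_norm :: "'a set \<Rightarrow> ('a \<Rightarrow> 'a \<Rightarrow> real) \<Rightarrow> ('a \<Rightarrow> real) \<Rightarrow> real" where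
  "native_norm \<Omega> K f = Sup (native_vals \<Omega> K f)"

text \<open>Kernel matrix A for points x indexed by the finite type 'n (n = CARD('n)).\<close>

definition kmat :: "('a \<Rightarrow> 'a \<Rightarrow> real) \<Rightarrow> ('n::finite \<Rightarrow> 'a) \<Rightarrow> real^'n^'n" where
  "kmat K x = (\<chi> i j. K (x i) (x j))"

definition coeffs :: "('a \<Rightarrow> 'a \<Rightarrow> real) \<Rightarrow> ('n::finite \<Rightarrow> 'a) \<Rightarrow> real \<Rightarrow> ('a \<Rightarrow> real) \<Rightarrow> real^'n" where
  "coeffs K x mu f = matrix_inv (kmat K x + mu *\<^sub>R mat 1) *v (\<chi> i. f (x i))"

definition s_approx :: "('a \<Rightarrow> 'a \<Rightarrow> real) \<Rightarrow> ('n::finite \<Rightarrow> 'a) \<Rightarrow> real \<Rightarrow> ('a \<Rightarrow> real) \<Rightarrow> 'a \<Rightarrow> real" where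
  "s_approx K x mu f y = (\<Sum>j\<in>UNIV. coeffs K x mu f $ j * K y (x j))"

definition I_interp :: "('a \<Rightarrow> 'a \<Rightarrow> real) \<Rightarrow> ('n::finite \<Rightarrow> 'a) \<Rightarrow> real \<Rightarrow> ('a \<Rightarrow> real) \<Rightarrow> 'a \<Rightarrow> real" where
  "I_interp K x lam f y = (\<Sum>j\<in>UNIV. coeffs K x lam f $ j * reg_kernel K lam y (x j))"

text \<open>Power functions. "f \<noteq> 0" means f is not identically zero on \<Omega>.
  The supremum is taken together with 0 (all quotients are nonnegative), so that the
  supremum over an empty family is 0.\<close>

definition power_P :: "'a set \<Rightarrow> ('a \<Rightarrow> 'a \<Rightarrow> real) \<Rightarrow> ('n::finite \<Rightarrow> 'a) \<Rightarrow> real \<Rightarrow> 'a \<Rightarrow> real" where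
  "power_P \<Omega> K x mu y = Sup (insert 0
     {\<bar>f y - s_approx K x mu f y\<bar> / native_norm \<Omega> K f | f.
        in_native \<Omega> K f \<and> (\<exists>z\<in>\<Omega>. f z \<noteq> 0)})"

definition power_Q :: "'a set \<Rightarrow> ('a \<Rightarrow> 'a \<Rightarrow> real) \<Rightarrow> ('n::finite \<Rightarrow> 'a) \<Rightarrow> real \<Rightarrow> 'a \<Rightarrow> real" where
  "power_Q \<Omega> K x lam y = Sup (insert 0
     {\<bar>f y - I_interp K x lam f y\<bar> / native_norm \<Omega> (reg_kernel K lam) f | f.
        in_native \<Omega> (reg_kernel K lam) f \<and> (\<exists>z\<in>\<Omega>. f z \<noteq> 0)})"

definition lagrange :: "('a \<Rightarrow> 'a \<Rightarrow> real) \<Rightarrow> ('n::finite \<Rightarrow> 'a) \<Rightarrow> real \<Rightarrow> 'n \<Rightarrow> 'a \<Rightarrow> real" where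
  "lagrange K x mu j y =
     (\<Sum>i\<in>UNIV. matrix_inv (kmat K x + mu *\<^sub>R mat 1) $ i $ j * K y (x i))"

definition lebesgue2 :: "('a \<Rightarrow> 'a \<Rightarrow> real) \<Rightarrow> ('n::finite \<Rightarrow> 'a) \<Rightarrow> real \<Rightarrow> 'a \<Rightarrow> real" where
  "lebesgue2 K x mu y = sqrt (\<Sum>j\<in>UNIV. (lagrange K x mu j y)\<^sup>2)"

end

theory Submission
  imports Defs
begin

definition BF :: "('a \<Rightarrow> 'a \<Rightarrow> real) \<Rightarrow> 'a set \<Rightarrow> ('a \<Rightarrow> real) \<Rightarrow> ('a \<Rightarrow> real) \<Rightarrow> real" where
  "BF L T a b = (\<Sum>p\<in>T. \<Sum>q\<in>T. a p * b q * L p q)"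

definition qf :: "('a \<Rightarrow> 'a \<Rightarrow> real) \<Rightarrow> ('m::finite \<Rightarrow> 'a) \<Rightarrow> ('m \<Rightarrow> real) \<Rightarrow> real" where
  "qf L z w = (\<Sum>k\<in>UNIV. \<Sum>l\<in>UNIV. w k * w l * L (z k) (z l))"

definition fam :: "('m::finite \<Rightarrow> 'a) \<Rightarrow> ('m \<Rightarrow> real) \<Rightarrow> 'a \<Rightarrow> real" where
  "fam z w p = (\<Sum>k\<in>{k. z k = p}. w k)"

lemma fiber:
  fixes z :: "'m::finite \<Rightarrow> 'a"
  assumes "finite T" "range z \<subseteq> T"
  shows "(\<Sum>p\<in>T. fam z w p * h p) = (\<Sum>k\<in>UNIV. w k * h (z k))"
proof -
  have "(\<Sum>p\<in>T. fam z w p * h p) = (\<Sum>p\<in>T. \<Sum>k\<in>{k\<in>UNIV. z k = p}. w k * h (z k))"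
    unfolding fam_def by (auto simp: sum_distrib_right intro!: sum.cong)
  also have "\<dots> = (\<Sum>k\<in>UNIV. w k * h (z k))"
    using sum.group[of UNIV T z "\<lambda>k. w k * h (z k)"] assms by auto
  finally show ?thesis .
qed

lemma qf_BF:
  fixes z :: "'m::finite \<Rightarrow> 'a"
  assumes "finite T" "range z \<subseteq> T"
  shows "BF L T (fam z w) (fam z w) = qf L z w"
proof -
  have "BF L T (fam z w) (fam z w) = (\<Sum>p\<in>T. fam z w p * (\<Sum>q\<in>T. fam z w q * L p q))"
    unfolding BF_def by (simp add: sum_distrib_left mult.assoc)
  also have "\<dots> = (\<Sum>p\<in>T. fam z w p * (\<Sum>l\<in>UNIV. w l * L p (z l)))"
    using fiber[OF assms, of w] by simp
  also have "\<dots> = (\<Sum>k\<in>UNIV. w k * (\<Sum>l\<in>UNIV. w l * L (z k) (z l)))"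
    using fiber[OF assms, of w "\<lambda>p. (\<Sum>l\<in>UNIV. w l * L p (z l))"] by simp
  also have "\<dots> = qf L z w"
    unfolding qf_def by (simp add: sum_distrib_left mult.assoc)
  finally show ?thesis .
qed

lemma qf_nonneg:
  fixes z :: "'m::finite \<Rightarrow> 'a"
  assumes "pd_kernel \<Omega> L" "range z \<subseteq> \<Omega>"
  shows "0 \<le> qf L z w"
proof -
  have "0 \<le> BF L (range z) (fam z w) (fam z w)"
    using assms unfolding pd_kernel_def BF_def by auto
  then show ?thesis using qf_BF[of "range z" z L w] by simp
qed

lemma discr:
  fixes A B C :: real
  assumes "\<And>t. 0 \<le> A + 2*t*B + t^2*C" "0 \<le> C"
  shows "B^2 \<le> A*C"
proof (cases "C = 0")
  case True
  have "B = 0"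
  proof (rule ccontr)
    assume "B \<noteq> 0"
    have "0 \<le> A + 2*(-(A+1)/(2*B))*B" using assms(1)[of "-(A+1)/(2*B)"] True by simp
    also have "\<dots> = -1" using \<open>B \<noteq> 0\<close> by (simp add: field_simps)
    finally show False by simp
  qed
  then show ?thesis using True by simp
next
  case False
  then have C: "C > 0" using assms(2) by simp
  have "0 \<le> A + 2*(-B/C)*B + (-B/C)^2*C" using assms(1) .
  also have "\<dots> = A - B^2/C" using C by (simp add: field_simps power2_eq_square)
  finally have "B^2/C \<le> A" by simp
  then show ?thesis using C by (simp add: field_simps)
qed

lemma BF_sym:
  assumes "pd_kernel \<Omega> L" "T \<subseteq> \<Omega>"
  shows "BF L T b a = BF L T a b"
proof -
  have "BF L T b a = (\<Sum>q\<in>T. \<Sum>p\<in>T. b q * a p * L q p)" unfolding BF_def ..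
  also have "\<dots> = (\<Sum>p\<in>T. \<Sum>q\<in>T. b q * a p * L q p)" by (rule sum.swap)
  also have "\<dots> = BF L T a b" unfolding BF_def
    using assms unfolding pd_kernel_def
    by (intro sum.cong refl) (auto simp: subset_iff)
  finally show ?thesis .
qed

lemma BF_CS:
  assumes "pd_kernel \<Omega> L" "finite T" "T \<subseteq> \<Omega>"
  shows "(BF L T a b)^2 \<le> BF L T a a * BF L T b b"
proof (rule discr)
  fix t
  have "0 \<le> BF L T (\<lambda>p. a p + t * b p) (\<lambda>p. a p + t * b p)"
    using assms unfolding pd_kernel_def BF_def by auto
  also have "\<dots> = BF L T a a + t * BF L T a b + t * BF L T b a + t^2 * BF L T b b"
    unfolding BF_def by (simp add: algebra_simps sum.distrib sum_distrib_left power2_eq_square)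
  finally show "0 \<le> BF L T a a + 2*t*BF L T a b + t^2*BF L T b b"
    using BF_sym[OF assms(1,3), of b a] by simp
  show "0 \<le> BF L T b b" using assms unfolding pd_kernel_def BF_def by auto
qed


lemma BF_scale: "BF L T (\<lambda>p. r * a p) (\<lambda>p. r * a p) = r^2 * BF L T a a"
  unfolding BF_def by (simp add: sum_distrib_left power2_eq_square algebra_simps)

lemma native_vals_0: "0 \<in> native_vals \<Omega> L f"
  unfolding native_vals_def by (auto intro!: exI[of _ "{}"])

lemma native_norm_ge:
  assumes "in_native \<Omega> L f" "finite S" "S \<subseteq> \<Omega>" "BF L S c c \<le> 1"
  shows "\<bar>\<Sum>p\<in>S. c p * f p\<bar> \<le> native_norm \<Omega> L f"
  unfolding native_norm_def
  apply (rule cSup_upper)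
  using assms unfolding native_vals_def in_native_def BF_def by auto

lemma native_norm_nonneg:
  assumes "in_native \<Omega> L f" shows "0 \<le> native_norm \<Omega> L f"
  unfolding native_norm_def
  by (rule cSup_upper2[OF native_vals_0]) (use assms in \<open>auto simp: in_native_def\<close>)

lemma UB:
  fixes z :: "'m::finite \<Rightarrow> 'a"
  assumes pd: "pd_kernel \<Omega> L" and rz: "range z \<subseteq> \<Omega>" and f: "in_native \<Omega> L f"
  shows "\<bar>\<Sum>k\<in>UNIV. w k * f (z k)\<bar> \<le> native_norm \<Omega> L f * sqrt (qf L z w)"
proof -
  define c where "c = fam z w"
  define E where "E = (\<Sum>k\<in>UNIV. w k * f (z k))"
  define N where "N = native_norm \<Omega> L f"
  have fin: "finite (range z)" by simp
  have E: "(\<Sum>p\<in>range z. c p * f p) = E" unfolding c_def E_def using fiber[OF fin order_refl] by simp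
  have Q: "BF L (range z) c c = qf L z w" unfolding c_def using qf_BF[OF fin order_refl] by simp
  have q0: "0 \<le> qf L z w" using qf_nonneg[OF pd rz] .
  have N0: "0 \<le> N" unfolding N_def using native_norm_nonneg[OF f] .
  have scal: "\<bar>r * E\<bar> \<le> N" if "r^2 * qf L z w \<le> 1" for r
  proof -
    have "\<bar>\<Sum>p\<in>range z. r * c p * f p\<bar> \<le> N" unfolding N_def
      using native_norm_ge[OF f fin rz, of "\<lambda>p. r * c p"] BF_scale[of L "range z" r c] Q that
      by simp
    moreover have "(\<Sum>p\<in>range z. r * c p * f p) = r * (\<Sum>p\<in>range z. c p * f p)"
      by (simp add: sum_distrib_left mult.assoc)
    ultimately show ?thesis using E by simp
  qed
  show ?thesis
  proof (cases "qf L z w = 0")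
    case True
    have "E = 0"
    proof (rule ccontr)
      assume "E \<noteq> 0"
      have "\<bar>((N+1)/\<bar>E\<bar>) * E\<bar> \<le> N" by (rule scal) (use True in simp)
      also have "\<bar>((N+1)/\<bar>E\<bar>) * E\<bar> = N + 1" using \<open>E \<noteq> 0\<close> N0 by (simp add: abs_mult)
      finally show False by simp
    qed
    then show ?thesis using N0 True by (simp add: E_def[symmetric] N_def[symmetric])
  next
    case False
    then have qp: "0 < qf L z w" using q0 by simp
    have "\<bar>(1/sqrt (qf L z w)) * E\<bar> \<le> N" by (rule scal) (use qp in \<open>simp add: power_divide\<close>)
    then have "\<bar>E\<bar> / sqrt (qf L z w) \<le> N" using q0 by (simp add: abs_mult)
    then show ?thesis using qp by (simp add: E_def[symmetric] N_def[symmetric] field_simps)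
  qed
qed

lemma BF_restrict:
  fixes a b :: "'a \<Rightarrow> real" and L :: "'a \<Rightarrow> 'a \<Rightarrow> real"
  assumes "finite U" "S \<subseteq> U" "T \<subseteq> U" "\<And>p. p \<notin> S \<Longrightarrow> a p = 0" "\<And>q. q \<notin> T \<Longrightarrow> b q = 0"
  shows "(\<Sum>p\<in>U. \<Sum>q\<in>U. a p * b q * L p q) = (\<Sum>p\<in>S. \<Sum>q\<in>T. a p * b q * L p q)"
proof -
  have "(\<Sum>p\<in>U. \<Sum>q\<in>U. a p * b q * L p q) = (\<Sum>p\<in>U. \<Sum>q\<in>T. a p * b q * L p q)"
    by (rule sum.cong[OF refl], rule sum.mono_neutral_right) (use assms in \<open>auto intro: finite_subset\<close>)
  also have "\<dots> = (\<Sum>p\<in>S. \<Sum>q\<in>T. a p * b q * L p q)"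
    by (rule sum.mono_neutral_right) (use assms in \<open>auto intro: finite_subset\<close>)
  finally show ?thesis .
qed

lemma fam_out: "p \<notin> range z \<Longrightarrow> fam z w p = 0"
  unfolding fam_def by (metis (mono_tags, lifting) empty_Collect_eq rangeI sum.empty)

lemma LB:
  fixes z :: "'m::finite \<Rightarrow> 'a" and w :: "'m \<Rightarrow> real"
  assumes pd: "pd_kernel \<Omega> L" and rz: "range z \<subseteq> \<Omega>"
  defines "g \<equiv> (\<lambda>p. \<Sum>l\<in>UNIV. w l * L p (z l))"
  shows "in_native \<Omega> L g \<and> native_norm \<Omega> L g \<le> sqrt (qf L z w)"
proof -
  have q0: "0 \<le> qf L z w" using qf_nonneg[OF pd rz] .
  have bnd: "v \<le> sqrt (qf L z w)" if vin: "v \<in> native_vals \<Omega> L g" for v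
  proof -
    obtain S c where v: "v = \<bar>\<Sum>p\<in>S. c p * g p\<bar>" and S: "finite S" "S \<subseteq> \<Omega>"
      and c1: "(\<Sum>p\<in>S. \<Sum>q\<in>S. c p * c q * L p q) \<le> 1"
      using vin unfolding native_vals_def by blast
    define U where "U = S \<union> range z"
    define a where "a = (\<lambda>p. if p \<in> S then c p else 0)"
    define b where "b = fam z w"
    have U: "finite U" "U \<subseteq> \<Omega>" unfolding U_def using S rz by auto
    have ab: "BF L U a b = (\<Sum>p\<in>S. c p * g p)"
    proof -
      have "BF L U a b = (\<Sum>p\<in>U. a p * (\<Sum>q\<in>U. b q * L p q))"
        unfolding BF_def by (simp add: sum_distrib_left mult.assoc)
      also have "\<dots> = (\<Sum>p\<in>U. a p * g p)" unfolding b_def g_def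
        using fiber[OF U(1), of z w] U_def by simp
      also have "\<dots> = (\<Sum>p\<in>S. a p * g p)"
        by (rule sum.mono_neutral_right) (use U S in \<open>auto simp: U_def a_def\<close>)
      also have "\<dots> = (\<Sum>p\<in>S. c p * g p)" unfolding a_def by simp
      finally show ?thesis .
    qed
    have aa: "BF L U a a = BF L S c c" unfolding BF_def
      using BF_restrict[OF U(1), of S S a a L] by (simp add: U_def a_def)
    have bb: "BF L U b b = qf L z w" unfolding b_def
      using qf_BF[OF U(1), of z L w] by (simp add: U_def)
    have cc0: "0 \<le> BF L S c c" using pd S unfolding pd_kernel_def BF_def by auto
    have "v^2 \<le> BF L S c c * qf L z w"
      using BF_CS[OF pd U(1) U(2), of a b] ab aa bb v by simp
    also have "\<dots> \<le> qf L z w" using c1 q0 cc0 unfolding BF_def by (simp add: mult_left_le_one_le)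
    finally have "v^2 \<le> qf L z w" .
    then show ?thesis using real_le_rsqrt by blast
  qed
  have inn: "in_native \<Omega> L g" unfolding in_native_def bdd_above_def using bnd by blast
  have "native_norm \<Omega> L g \<le> sqrt (qf L z w)" unfolding native_norm_def
    using native_vals_0[of \<Omega> L g] bnd by (intro cSup_least) auto
  with inn show ?thesis by simp
qed

lemma power_eq:
  fixes z :: "'m::finite \<Rightarrow> 'a"
  assumes pd: "pd_kernel \<Omega> L" and rz: "range z \<subseteq> \<Omega>"
    and err: "\<And>f. err f = (\<Sum>k\<in>UNIV. w k * f (z k))"
  shows "Sup (insert 0 {\<bar>err f\<bar> / native_norm \<Omega> L f | f. in_native \<Omega> L f \<and> (\<exists>z\<in>\<Omega>. f z \<noteq> 0)})
     = sqrt (qf L z w)"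
proof -
  define s where "s = sqrt (qf L z w)"
  define M where "M = {\<bar>err f\<bar> / native_norm \<Omega> L f | f. in_native \<Omega> L f \<and> (\<exists>z\<in>\<Omega>. f z \<noteq> 0)}"
  have q0: "0 \<le> qf L z w" using qf_nonneg[OF pd rz] .
  have s0: "0 \<le> s" unfolding s_def using q0 by simp
  have ub: "v \<le> s" if "v \<in> insert 0 M" for v
  proof -
    { fix f assume f: "in_native \<Omega> L f"
      have "\<bar>err f\<bar> \<le> native_norm \<Omega> L f * s" using UB[OF pd rz f, of w] err s_def by simp
      then have "\<bar>err f\<bar> / native_norm \<Omega> L f \<le> s" using s0 native_norm_nonneg[OF f]
        by (cases "native_norm \<Omega> L f = 0") (auto simp: field_simps) }
    then show ?thesis using that s0 unfolding M_def by auto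
  qed
  have le: "Sup (insert 0 M) \<le> s" by (rule cSup_least) (use ub in auto)
  have bdd: "bdd_above (insert 0 M)" unfolding bdd_above_def using ub by blast
  have ge: "s \<le> Sup (insert 0 M)"
  proof (cases "qf L z w = 0")
    case True
    then show ?thesis unfolding s_def using bdd by (auto intro: cSup_upper)
  next
    case False
    then have qp: "0 < qf L z w" using q0 by simp
    define g where "g = (\<lambda>p. \<Sum>l\<in>UNIV. w l * L p (z l))"
    have gn: "in_native \<Omega> L g" "native_norm \<Omega> L g \<le> s"
      using LB[OF pd rz] unfolding g_def s_def by auto
    have eg: "err g = qf L z w" unfolding err g_def qf_def
      by (simp add: sum_distrib_left mult.assoc)
    have nz: "\<exists>z\<in>\<Omega>. g z \<noteq> 0"
    proof (rule ccontr)
      assume "\<not> ?thesis"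
      then have "\<forall>k. g (z k) = 0" using rz by auto
      then have "err g = 0" unfolding err by simp
      then show False using eg qp by simp
    qed
    have "qf L z w \<le> native_norm \<Omega> L g * s" using UB[OF pd rz gn(1), of w] eg err s_def by simp
    then have Np: "0 < native_norm \<Omega> L g" using qp native_norm_nonneg[OF gn(1)]
      by (cases "native_norm \<Omega> L g = 0") auto
    have sp: "0 < s" unfolding s_def using qp by simp
    have "s = qf L z w / s" unfolding s_def using qp by (simp add: real_div_sqrt)
    also have "\<dots> \<le> qf L z w / native_norm \<Omega> L g"
      using Np gn(2) qp by (simp add: frac_le)
    also have "\<dots> = \<bar>err g\<bar> / native_norm \<Omega> L g" using eg qp by simp
    also have "\<dots> \<le> Sup (insert 0 M)"
      by (rule cSup_upper[OF _ bdd]) (use gn nz in \<open>auto simp: M_def\<close>)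
    finally show ?thesis .
  qed
  show ?thesis using le ge unfolding M_def s_def by simp
qed


lemma sum_option: "(\<Sum>k\<in>(UNIV::'m::finite option set). g k) = g None + (\<Sum>i\<in>UNIV. g (Some i))"
proof -
  have "(\<Sum>k\<in>(UNIV::'m option set). g k) = (\<Sum>k\<in>insert None (range Some). g k)"
    by (simp add: UNIV_option_conv)
  also have "\<dots> = g None + (\<Sum>k\<in>range Some. g k)" by (subst sum.insert) auto
  also have "(\<Sum>k\<in>range Some. g k) = (\<Sum>i\<in>UNIV. g (Some i))"
    by (subst sum.reindex) (auto simp: inj_on_def)
  finally show ?thesis .
qed

lemma pd_reg:
  assumes "pd_kernel \<Omega> K" "0 \<le> lam"
  shows "pd_kernel \<Omega> (reg_kernel K lam)"
  unfolding pd_kernel_def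
proof (intro conjI ballI allI impI)
  fix a b assume "a \<in> \<Omega>" "b \<in> \<Omega>"
  then show "reg_kernel K lam a b = reg_kernel K lam b a"
    using assms unfolding pd_kernel_def reg_kernel_def delta_kernel_def by auto
next
  fix S c assume S: "finite (S::'a set)" "S \<subseteq> \<Omega>"
  have "(\<Sum>p\<in>S. \<Sum>q\<in>S. c p * c q * reg_kernel K lam p q)
     = (\<Sum>p\<in>S. \<Sum>q\<in>S. c p * c q * K p q) + lam * (\<Sum>p\<in>S. \<Sum>q\<in>S. c p * c q * delta_kernel p q)"
    unfolding reg_kernel_def by (simp add: algebra_simps sum.distrib sum_distrib_left)
  also have "(\<Sum>p\<in>S. \<Sum>q\<in>S. c p * c q * delta_kernel p q) = (\<Sum>p\<in>S. (c p)^2)"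
  proof (rule sum.cong[OF refl])
    fix p assume p: "p \<in> S"
    have "(\<Sum>q\<in>S. c p * c q * delta_kernel p q) = (\<Sum>q\<in>S. if p = q then c p * c q else 0)"
      unfolding delta_kernel_def by (intro sum.cong) auto
    also have "\<dots> = c p * c p" using sum.delta'[OF S(1), of p "\<lambda>q. c p * c q"] p by simp
    finally show "(\<Sum>q\<in>S. c p * c q * delta_kernel p q) = (c p)^2" by (simp add: power2_eq_square)
  qed
  moreover have "0 \<le> (\<Sum>p\<in>S. \<Sum>q\<in>S. c p * c q * K p q)" using assms S unfolding pd_kernel_def by auto
  moreover have "0 \<le> lam * (\<Sum>p\<in>S. (c p)^2)" using assms(2) by (simp add: sum_nonneg)
  ultimately show "0 \<le> (\<Sum>p\<in>S. \<Sum>q\<in>S. c p * c q * reg_kernel K lam p q)" by simp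
qed

lemma coeff_swap:
  fixes M :: "real^'n^'n" and G :: "'n \<Rightarrow> real"
  shows "(\<Sum>j\<in>UNIV. (M *v (\<chi> i. f (x i))) $ j * G j) = (\<Sum>i\<in>UNIV. (\<Sum>j\<in>UNIV. M$j$i * G j) * f (x i))"
proof -
  have "(\<Sum>j\<in>UNIV. (M *v (\<chi> i. f (x i))) $ j * G j) = (\<Sum>j\<in>UNIV. \<Sum>i\<in>UNIV. M$j$i * G j * f (x i))"
    unfolding matrix_vector_mult_def by (simp add: sum_distrib_right sum_distrib_left mult_ac)
  also have "\<dots> = (\<Sum>i\<in>UNIV. \<Sum>j\<in>UNIV. M$j$i * G j * f (x i))" by (rule sum.swap)
  also have "\<dots> = (\<Sum>i\<in>UNIV. (\<Sum>j\<in>UNIV. M$j$i * G j) * f (x i))" by (simp add: sum_distrib_right)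
  finally show ?thesis .
qed

definition wu :: "('n \<Rightarrow> real) \<Rightarrow> 'n option \<Rightarrow> real" where
  "wu u k = (case k of None \<Rightarrow> 1 | Some i \<Rightarrow> - u i)"

definition zz :: "'a \<Rightarrow> ('n \<Rightarrow> 'a) \<Rightarrow> 'n option \<Rightarrow> 'a" where
  "zz y x k = (case k of None \<Rightarrow> y | Some i \<Rightarrow> x i)"

lemma err_form:
  fixes x :: "'n::finite \<Rightarrow> 'a"
  shows "f y - (\<Sum>i\<in>UNIV. u i * f (x i)) = (\<Sum>k\<in>UNIV. wu u k * f (zz y x k))"
  by (simp add: sum_option wu_def zz_def sum_negf)

lemma minimize:
  fixes x :: "'n::finite \<Rightarrow> 'a"
  assumes pd: "pd_kernel \<Omega> L" and rz: "range (zz y x) \<subseteq> \<Omega>"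
    and m: "\<And>l. (\<Sum>i\<in>UNIV. m i * L (x i) (x l)) = L y (x l)"
  shows "qf L (zz y x) (wu m) \<le> qf L (zz y x) (wu u)"
proof -
  define z where "z = zz y x"
  define a where "a = wu m"
  define b where "b = (\<lambda>k. case k of None \<Rightarrow> 0 | Some i \<Rightarrow> m i - u i)"
  have sym: "L (z k) (z l) = L (z l) (z k)" for k l
  proof -
    have "z k \<in> \<Omega>" "z l \<in> \<Omega>" using rz unfolding z_def by auto
    then show ?thesis using pd unfolding pd_kernel_def by auto
  qed
  have ab: "wu u = (\<lambda>k. a k + b k)"
    by (rule ext) (simp add: a_def b_def wu_def split: option.split)
  have exp: "qf L z (\<lambda>k. a k + b k) = qf L z a + (\<Sum>k\<in>UNIV. \<Sum>l\<in>UNIV. a k * b l * L (z k) (z l))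
      + (\<Sum>k\<in>UNIV. \<Sum>l\<in>UNIV. b k * a l * L (z k) (z l)) + qf L z b"
    unfolding qf_def by (simp only: distrib_left distrib_right sum.distrib)
  have swp: "(\<Sum>k\<in>UNIV. \<Sum>l\<in>UNIV. a k * b l * L (z k) (z l)) = (\<Sum>k\<in>UNIV. \<Sum>l\<in>UNIV. b k * a l * L (z k) (z l))"
    by (subst sum.swap) (simp add: sym mult.commute)
  have inner: "(\<Sum>l\<in>UNIV. a l * L (x i) (z l)) = 0" for i
  proof -
    have "(\<Sum>l\<in>UNIV. a l * L (x i) (z l)) = L (x i) y - (\<Sum>j\<in>UNIV. m j * L (x i) (x j))"
      by (simp add: sum_option a_def wu_def z_def zz_def sum_negf)
    also have "(\<Sum>j\<in>UNIV. m j * L (x i) (x j)) = (\<Sum>j\<in>UNIV. m j * L (x j) (x i))"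
      using sym[of "Some i" "Some _"] by (simp add: z_def zz_def)
    also have "\<dots> = L y (x i)" by (rule m)
    also have "L (x i) y = L y (x i)" using sym[of "Some i" None] by (simp add: z_def zz_def)
    finally show ?thesis by simp
  qed
  have cross: "(\<Sum>k\<in>UNIV. \<Sum>l\<in>UNIV. b k * a l * L (z k) (z l)) = 0"
  proof -
    have "(\<Sum>k\<in>UNIV. \<Sum>l\<in>UNIV. b k * a l * L (z k) (z l)) = (\<Sum>k\<in>UNIV. b k * (\<Sum>l\<in>UNIV. a l * L (z k) (z l)))"
      by (simp add: sum_distrib_left mult.assoc)
    also have "\<dots> = 0" using inner by (simp add: sum_option b_def z_def zz_def)
    finally show ?thesis .
  qed
  have "0 \<le> qf L z b" using qf_nonneg[OF pd] rz unfolding z_def by blast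
  then show ?thesis using exp swp cross ab unfolding z_def[symmetric] a_def by simp
qed


lemma B_comp: "(kmat K x + lam *\<^sub>R mat 1) $ i $ j = K (x i) (x j) + lam * (if i = j then 1 else 0)"
  by (simp add: kmat_def mat_def)

lemma B_inv:
  fixes x :: "'n::finite \<Rightarrow> 'a"
  assumes pd: "pd_kernel \<Omega> K" and rx: "range x \<subseteq> \<Omega>" and lam: "0 < lam"
  shows "matrix_inv (kmat K x + lam *\<^sub>R mat 1) ** (kmat K x + lam *\<^sub>R mat 1) = mat 1"
proof -
  define B where "B = kmat K x + lam *\<^sub>R mat 1"
  have ker: "\<forall>v. B *v v = 0 \<longrightarrow> v = 0"
  proof (intro allI impI)
    fix v assume Bv: "B *v v = 0"
    have row: "(\<Sum>j\<in>UNIV. K (x i) (x j) * v$j) = - lam * v$i" for i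
    proof -
      have "0 = (B *v v) $ i" using Bv by simp
      also have "\<dots> = (\<Sum>j\<in>UNIV. (K (x i) (x j) + lam * (if i = j then 1 else 0)) * v$j)"
        unfolding B_def matrix_vector_mult_def by (simp add: kmat_def mat_def)
      also have "\<dots> = (\<Sum>j\<in>UNIV. K (x i) (x j) * v$j) + (\<Sum>j\<in>UNIV. lam * (if i = j then 1 else 0) * v$j)"
        by (simp only: distrib_right sum.distrib)
      also have "(\<Sum>j\<in>UNIV. lam * (if i = j then 1 else 0) * v$j) = (\<Sum>j\<in>UNIV. if i = j then lam * v$j else 0)"
        by (intro sum.cong) auto
      also have "\<dots> = lam * v$i" by simp
      finally show ?thesis by simp
    qed
    have "0 \<le> qf K x (\<lambda>i. v$i)" using qf_nonneg[OF pd rx] .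
    also have "qf K x (\<lambda>i. v$i) = (\<Sum>i\<in>UNIV. v$i * (\<Sum>j\<in>UNIV. K (x i) (x j) * v$j))"
      unfolding qf_def by (simp add: sum_distrib_left mult_ac)
    also have "\<dots> = - lam * (\<Sum>i\<in>UNIV. (v$i)^2)"
      by (simp only: row) (simp add: sum_distrib_left power2_eq_square mult_ac sum_negf)
    finally have "(\<Sum>i\<in>UNIV. (v$i)^2) \<le> 0" using lam
      by (simp add: mult_le_0_iff)
    then have "\<forall>i. (v$i)^2 = 0"
      using sum_nonneg_eq_0_iff[of UNIV "\<lambda>i. (v$i)^2"] by (simp add: order_antisym sum_nonneg)
    then show "v = 0" by (simp add: vec_eq_iff)
  qed
  then have "\<exists>B'. B' ** B = mat 1" using matrix_left_invertible_ker by blast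
  then have "invertible B" using invertible_left_inverse by blast
  then have "B ** matrix_inv B = mat 1 \<and> matrix_inv B ** B = mat 1"
    unfolding invertible_def matrix_inv_def by (rule someI_ex)
  then show ?thesis unfolding B_def by simp
qed

lemma m_ident:
  fixes x :: "'n::finite \<Rightarrow> 'a"
  assumes inv: "matrix_inv (kmat K x + lam *\<^sub>R mat 1) ** (kmat K x + lam *\<^sub>R mat 1) = mat 1"
    and inj: "inj x"
  shows "(\<Sum>i\<in>UNIV. (\<Sum>j\<in>UNIV. matrix_inv (kmat K x + lam *\<^sub>R mat 1) $ j $ i * reg_kernel K lam y (x j))
            * reg_kernel K lam (x i) (x l)) = reg_kernel K lam y (x l)"
proof -
  define B where "B = kmat K x + lam *\<^sub>R mat 1"
  define Bi where "Bi = matrix_inv B"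
  define G where "G = (\<lambda>j. reg_kernel K lam y (x j))"
  have Lx: "reg_kernel K lam (x i) (x l) = B $ i $ l" for i
    unfolding B_def B_comp reg_kernel_def delta_kernel_def using inj by (simp add: inj_eq)
  have "(\<Sum>i\<in>UNIV. (\<Sum>j\<in>UNIV. Bi $ j $ i * G j) * B $ i $ l)
      = (\<Sum>i\<in>UNIV. \<Sum>j\<in>UNIV. G j * (Bi $ j $ i * B $ i $ l))"
    by (simp add: sum_distrib_right sum_distrib_left mult_ac)
  also have "\<dots> = (\<Sum>j\<in>UNIV. G j * (\<Sum>i\<in>UNIV. Bi $ j $ i * B $ i $ l))"
    by (subst sum.swap) (simp add: sum_distrib_left)
  also have "\<dots> = (\<Sum>j\<in>UNIV. G j * (Bi ** B) $ j $ l)"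
    by (simp add: matrix_matrix_mult_def)
  also have "\<dots> = G l" using inv unfolding Bi_def B_def
    by (simp add: mat_def if_distrib cong: if_cong)
  finally show ?thesis unfolding Bi_def B_def G_def Lx[unfolded B_def] .
qed

lemma qf_reg_inj:
  fixes z :: "'m::finite \<Rightarrow> 'a"
  assumes "inj z"
  shows "qf (reg_kernel K lam) z w = qf K z w + lam * (\<Sum>k\<in>UNIV. (w k)^2)"
proof -
  have "qf (reg_kernel K lam) z w = qf K z w + lam * (\<Sum>k\<in>UNIV. \<Sum>l\<in>UNIV. w k * w l * (if k = l then 1 else 0))"
    unfolding qf_def reg_kernel_def delta_kernel_def using assms
    by (simp add: algebra_simps sum.distrib sum_distrib_left inj_eq)
  also have "(\<Sum>k\<in>UNIV. \<Sum>l\<in>UNIV. w k * w l * (if k = l then 1 else 0)) = (\<Sum>k\<in>UNIV. (w k)^2)"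
    by (simp add: power2_eq_square if_distrib cong: if_cong)
  finally show ?thesis .
qed

lemma sum_wu_sq: "(\<Sum>k\<in>UNIV. (wu u k)^2) = 1 + (\<Sum>i\<in>(UNIV::'n::finite set). (u i)^2)"
  by (simp add: sum_option wu_def)

lemma inj_zz: "inj x \<Longrightarrow> y \<notin> range x \<Longrightarrow> inj (zz y x)"
  unfolding inj_def zz_def by (auto split: option.splits)

lemma qf_node:
  fixes x :: "'n::finite \<Rightarrow> 'a"
  assumes "y = x k"
  shows "qf L (zz y x) (wu (\<lambda>i. if i = k then 1 else 0)) = 0"
proof -
  define w where "w = wu (\<lambda>i. if i = k then (1::real) else 0)"
  have inner: "(\<Sum>l\<in>UNIV. w l * L p (zz y x l)) = 0" for p
  proof -
    have "(\<Sum>l\<in>UNIV. w l * L p (zz y x l)) = L p y + (\<Sum>i\<in>UNIV. - (if i = k then 1 else 0) * L p (x i))"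
      by (simp add: sum_option w_def wu_def zz_def)
    also have "(\<Sum>i\<in>UNIV. - (if i = k then 1 else 0) * L p (x i)) = (\<Sum>i\<in>UNIV. if i = k then - L p (x i) else 0)"
      by (intro sum.cong) auto
    also have "\<dots> = - L p (x k)" by simp
    finally show ?thesis using assms by simp
  qed
  have "qf L (zz y x) w = (\<Sum>k\<in>UNIV. w k * (\<Sum>l\<in>UNIV. w l * L (zz y x k) (zz y x l)))"
    unfolding qf_def by (simp add: sum_distrib_left mult_ac)
  also have "\<dots> = 0" using inner by simp
  finally show ?thesis unfolding w_def .
qed


theorem proposition3p4:
  fixes \<Omega> :: "(real^'d) set"
    and K :: "real^'d \<Rightarrow> real^'d \<Rightarrow> real"
    and x :: "'n::finite \<Rightarrow> real^'d"
    and lam mu :: real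
    and y :: "real^'d"
  assumes pd: "pd_kernel \<Omega> K"
    and pts: "range x \<subseteq> \<Omega>"
    and distinct: "inj x"
    and lam_pos: "lam > 0"
    and mu_nonneg: "0 \<le> mu"
    and mu_le: "mu \<le> lam"
    and strict: "mu = 0 \<Longrightarrow> strictly_pd_kernel \<Omega> K"
    and y_in: "y \<in> \<Omega>"
  shows "(power_Q \<Omega> K x lam y)\<^sup>2
           \<le> (power_P \<Omega> K x mu y)\<^sup>2 + lam * (1 + (lebesgue2 K x mu y)\<^sup>2)
         \<and> (mu = lam \<and> y \<notin> range x \<longrightarrow>
         (power_Q \<Omega> K x lam y)\<^sup>2
           = (power_P \<Omega> K x mu y)\<^sup>2 + lam * (1 + (lebesgue2 K x mu y)\<^sup>2))"
proof -
  define z where "z = zz y x"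
  define L where "L = reg_kernel K lam"
  define l where "l = (\<lambda>i. lagrange K x mu i y)"
  define Bi where "Bi = matrix_inv (kmat K x + lam *\<^sub>R mat 1)"
  define m where "m = (\<lambda>i. \<Sum>j\<in>UNIV. Bi $ j $ i * L y (x j))"
  have rz: "range z \<subseteq> \<Omega>" unfolding z_def zz_def using pts y_in by (auto simp: image_subset_iff split: option.splits)
  have pdL: "pd_kernel \<Omega> L" unfolding L_def using pd_reg[OF pd] lam_pos by simp
  have sP: "s_approx K x mu f y = (\<Sum>i\<in>UNIV. l i * f (x i))" for f
    unfolding s_approx_def coeffs_def l_def lagrange_def
    by (rule coeff_swap[where G="\<lambda>j. K y (x j)"])
  have sQ: "I_interp K x lam f y = (\<Sum>i\<in>UNIV. m i * f (x i))" for f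
    unfolding I_interp_def coeffs_def m_def Bi_def L_def
    by (rule coeff_swap[where G="\<lambda>j. reg_kernel K lam y (x j)"])
  have P: "power_P \<Omega> K x mu y = sqrt (qf K z (wu l))"
    unfolding power_P_def
    by (rule power_eq[where err="\<lambda>f. f y - s_approx K x mu f y", OF pd rz])
       (simp add: sP err_form z_def)
  have Q: "power_Q \<Omega> K x lam y = sqrt (qf L z (wu m))"
    unfolding power_Q_def L_def[symmetric]
    by (rule power_eq[where err="\<lambda>f. f y - I_interp K x lam f y", OF pdL rz])
       (simp add: sQ err_form z_def)
  have P2: "(power_P \<Omega> K x mu y)^2 = qf K z (wu l)" using P qf_nonneg[OF pd rz] by simp
  have Q2: "(power_Q \<Omega> K x lam y)^2 = qf L z (wu m)" using Q qf_nonneg[OF pdL rz] by simp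
  have Leb: "(lebesgue2 K x mu y)^2 = (\<Sum>i\<in>UNIV. (l i)^2)"
    unfolding lebesgue2_def l_def by (simp add: sum_nonneg)
  have inv: "Bi ** (kmat K x + lam *\<^sub>R mat 1) = mat 1"
    unfolding Bi_def using B_inv[OF pd pts lam_pos] .
  have mid: "(\<Sum>i\<in>UNIV. m i * L (x i) (x j)) = L y (x j)" for j
    unfolding m_def Bi_def L_def using m_ident[OF inv[unfolded Bi_def] distinct] by blast
  have minim: "qf L z (wu m) \<le> qf L z (wu u)" for u
    unfolding z_def using minimize[OF pdL rz[unfolded z_def] mid] .
  have P0: "0 \<le> (power_P \<Omega> K x mu y)^2" by simp
  show ?thesis
  proof (cases "y \<in> range x")
    case True
    then obtain k where k: "y = x k" by auto
    have "(power_Q \<Omega> K x lam y)^2 \<le> 0"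
      using Q2 minim[of "\<lambda>i. if i = k then 1 else 0"] qf_node[where y=y and x=x and k=k and L=L, OF k] unfolding z_def by simp
    moreover have "0 \<le> lam * (1 + (lebesgue2 K x mu y)\<^sup>2)" using lam_pos by simp
    ultimately show ?thesis using True P0 by linarith
  next
    case False
    have injz: "inj z" unfolding z_def using inj_zz[OF distinct False] .
    have eqQ: "qf L z (wu u) = qf K z (wu u) + lam * (1 + (\<Sum>i\<in>UNIV. (u i)^2))" for u
      unfolding L_def using qf_reg_inj[OF injz] sum_wu_sq[of u] by simp
    have le: "(power_Q \<Omega> K x lam y)\<^sup>2 \<le> (power_P \<Omega> K x mu y)\<^sup>2 + lam * (1 + (lebesgue2 K x mu y)\<^sup>2)"
      using Q2 P2 Leb minim[of l] eqQ[of l] by simp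
    have eq: "(power_Q \<Omega> K x lam y)\<^sup>2 = (power_P \<Omega> K x mu y)\<^sup>2 + lam * (1 + (lebesgue2 K x mu y)\<^sup>2)"
      if "mu = lam"
    proof -
      have "m = l"
      proof
        fix i
        have "L y (x j) = K y (x j)" for j
          using False unfolding L_def reg_kernel_def delta_kernel_def by auto
        then show "m i = l i" unfolding m_def l_def lagrange_def Bi_def that by simp
      qed
      then show ?thesis using Q2 P2 Leb eqQ[of l] by simp
    qed
    show ?thesis using le eq by simp
  qed
qed

end
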